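(* For every LCNF formula $\Phi$ and any two labelled clauses $C_1^{L_1}, C_2^{L_2} \in \Phi$, $\mathsf{MCS}(\mathsf{sub}(\Phi, C_1^{L_1}, C_2^{L_2})) = \mathsf{MCS}(\Phi)$.
   Context: Fix a countable set $Lbls$ of labels. A labelled clause $C^L$ is a pair of a clause $C$ (a finite set of literals) and a finite set $L \subseteq Lbls$. An LCNF formula $\Phi$ is a finite set of labelled clauses; $Cls(\Phi) = \{C : C^L \in \Phi\}$ and $Lbls(\Phi) = \bigcup_{C^L\in\Phi} L$. $\Phi$ is satisfiable iff $Cls(\Phi)$ is. For $M \subseteq Lbls(\Phi)$, the induced subformula is $\Phi|_M = \{C^L \in \Phi : L \subseteq M\}$. A set $R \subseteq Lbls(\Phi)$ is an MCS of $\Phi$ if (i) $\Phi|_{Lbls(\Phi)\setminus R}$ is satisfiable and (ii) for every $l \in R$, $\Phi|_{(Lbls(\Phi)\setminus R)\cup\{l\}}$ is unsatisfiable; $\mathsf{MCS}(\Phi)$ is the set of all MCSes of $\Phi$. A labelled clause $C_1^{L_1}$ subsumes $C_2^{L_2}$, written $C_1^{L_1} \subset C_2^{L_2}$, if $C_1 \subset C_2$ and $L_1 \subseteq L_2$. Define $\mathsf{sub}(\Phi, C_1^{L_1}, C_2^{L_2}) = \Phi \setminus \{C_2^{L_2}\}$ if $C_1^{L_1} \subset C_2^{L_2}$, and $\mathsf{sub}(\Phi, C_1^{L_1}, C_2^{L_2}) = \Phi$ otherwise. *)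

theory Defs
  imports "HOL-Library.Countable"
begin

datatype 'v literal = Pos 'v | Neg 'v

type_synonym 'v clause = "'v literal set"
type_synonym ('v, 'l) lclause = "'v clause \<times> 'l set"

fun lit_true :: "('v \<Rightarrow> bool) \<Rightarrow> 'v literal \<Rightarrow> bool" where
  "lit_true \<sigma> (Pos v) = \<sigma> v"
| "lit_true \<sigma> (Neg v) = (\<not> \<sigma> v)"

definition cls_satisfiable :: "'v clause set \<Rightarrow> bool" where
  "cls_satisfiable S \<longleftrightarrow> (\<exists>\<sigma>. \<forall>C\<in>S. \<exists>x\<in>C. lit_true \<sigma> x)"

definition is_LCNF :: "('v, 'l) lclause set \<Rightarrow> bool" where
  "is_LCNF \<Phi> \<longleftrightarrow> finite \<Phi> \<and> (\<forall>(C, L)\<in>\<Phi>. finite C \<and> finite L)"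

definition Cls :: "('v, 'l) lclause set \<Rightarrow> 'v clause set" where
  "Cls \<Phi> = fst ` \<Phi>"

definition Lbls :: "('v, 'l) lclause set \<Rightarrow> 'l set" where
  "Lbls \<Phi> = \<Union> (snd ` \<Phi>)"

definition lsat :: "('v, 'l) lclause set \<Rightarrow> bool" where
  "lsat \<Phi> \<longleftrightarrow> cls_satisfiable (Cls \<Phi>)"

definition induced :: "('v, 'l) lclause set \<Rightarrow> 'l set \<Rightarrow> ('v, 'l) lclause set" where
  "induced \<Phi> M = {(C, L) \<in> \<Phi>. L \<subseteq> M}"

definition is_MCS :: "('v, 'l) lclause set \<Rightarrow> 'l set \<Rightarrow> bool" where
  "is_MCS \<Phi> R \<longleftrightarrow> R \<subseteq> Lbls \<Phi>
     \<and> lsat (induced \<Phi> (Lbls \<Phi> - R))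
     \<and> (\<forall>l\<in>R. \<not> lsat (induced \<Phi> ((Lbls \<Phi> - R) \<union> {l})))"

definition MCS :: "('v, 'l) lclause set \<Rightarrow> 'l set set" where
  "MCS \<Phi> = {R. is_MCS \<Phi> R}"

definition lsubsumes :: "('v, 'l) lclause \<Rightarrow> ('v, 'l) lclause \<Rightarrow> bool" where
  "lsubsumes c1 c2 \<longleftrightarrow> fst c1 \<subset> fst c2 \<and> snd c1 \<subseteq> snd c2"

definition sub :: "('v, 'l) lclause set \<Rightarrow> ('v, 'l) lclause \<Rightarrow> ('v, 'l) lclause \<Rightarrow> ('v, 'l) lclause set" where
  "sub \<Phi> c1 c2 = (if lsubsumes c1 c2 then \<Phi> - {c2} else \<Phi>)"

end

theory Submission
  imports Defs
begin

lemma sat_remove: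
  assumes "lsubsumes c1 c2" "c1 \<in> \<Phi>"
  shows "lsat (induced \<Phi> M) = lsat (induced (\<Phi> - {c2}) M)"
proof -
  obtain C1 L1 where c1: "c1 = (C1, L1)" by (cases c1)
  obtain C2 L2 where c2: "c2 = (C2, L2)" by (cases c2)
  have sub: "C1 \<subset> C2" "L1 \<subseteq> L2" using assms(1) c1 c2 by (auto simp: lsubsumes_def)
  have ne: "c1 \<noteq> c2" using sub c1 c2 by auto
  have I: "induced (\<Phi> - {c2}) M = induced \<Phi> M - {c2}" by (auto simp: induced_def)
  show ?thesis
  proof
    assume "lsat (induced \<Phi> M)"
    then obtain \<sigma> where s: "\<forall>C\<in>Cls (induced \<Phi> M). \<exists>x\<in>C. lit_true \<sigma> x"
      unfolding lsat_def cls_satisfiable_def by blast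
    have "Cls (induced (\<Phi> - {c2}) M) \<subseteq> Cls (induced \<Phi> M)"
      unfolding I Cls_def by (rule image_mono) blast
    then show "lsat (induced (\<Phi> - {c2}) M)" unfolding lsat_def cls_satisfiable_def
      using s by blast
  next
    assume a: "lsat (induced (\<Phi> - {c2}) M)"
    then obtain \<sigma> where s: "\<forall>C\<in>Cls (induced \<Phi> M - {c2}). \<exists>x\<in>C. lit_true \<sigma> x"
      unfolding I lsat_def cls_satisfiable_def by blast
    show "lsat (induced \<Phi> M)" unfolding lsat_def cls_satisfiable_def
    proof (intro exI ballI)
      fix C assume "C \<in> Cls (induced \<Phi> M)"
      then obtain L where CL: "(C, L) \<in> induced \<Phi> M" unfolding Cls_def by force
      show "\<exists>x\<in>C. lit_true \<sigma> x"
      proof (cases "(C, L) = c2")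
        case False
        then have "(C, L) \<in> induced \<Phi> M - {c2}" using CL by blast
        then have "C \<in> Cls (induced \<Phi> M - {c2})" unfolding Cls_def by (metis fst_conv image_eqI)
        then show ?thesis using s by blast
      next
        case True
        then have "L2 \<subseteq> M" "C = C2" using CL c2 by (auto simp: induced_def)
        then have "c1 \<in> induced \<Phi> M - {c2}" using sub assms(2) c1 ne by (auto simp: induced_def)
        then have "C1 \<in> Cls (induced \<Phi> M - {c2})" using c1 unfolding Cls_def by (metis fst_conv image_eqI)
        then obtain x where "x \<in> C1" "lit_true \<sigma> x" using s by blast
        then show ?thesis using \<open>C = C2\<close> sub by blast
      qed
    qed
  qed
qed

lemma induced_restrict: "induced \<Phi> M = induced \<Phi> (M \<inter> Lbls \<Phi>)"
  by (auto simp: induced_def Lbls_def)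

lemma Lbls_mono: "Lbls (\<Phi> - {c}) \<subseteq> Lbls \<Phi>"
  by (auto simp: Lbls_def)

theorem proposition3:
  fixes \<Phi> :: "('v, 'l::countable) lclause set"
  assumes "is_LCNF \<Phi>" and "c1 \<in> \<Phi>" and "c2 \<in> \<Phi>"
  shows "MCS (sub \<Phi> c1 c2) = MCS \<Phi>"
proof (cases "lsubsumes c1 c2")
  case False
  then show ?thesis by (simp add: sub_def)
next
  case True
  define \<Psi> where "\<Psi> = \<Phi> - {c2}"
  define E where "E = Lbls \<Phi>"
  define E' where "E' = Lbls \<Psi>"
  have EE: "E' \<subseteq> E" unfolding E_def E'_def \<Psi>_def by (rule Lbls_mono)
  have S: "\<And>M. lsat (induced \<Phi> M) = lsat (induced \<Psi> (M \<inter> E'))"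
    using sat_remove[OF True assms(2)] induced_restrict unfolding \<Psi>_def E'_def by metis
  have "is_MCS \<Psi> R = is_MCS \<Phi> R" for R
  proof
    assume m: "is_MCS \<Psi> R"
    then have R: "R \<subseteq> E'" unfolding is_MCS_def E'_def by blast
    have e1: "(E - R) \<inter> E' = E' - R" using EE by blast
    have e2: "(E - R \<union> {l}) \<inter> E' = E' - R \<union> {l}" if "l \<in> R" for l using EE R that by blast
    have a1: "lsat (induced \<Phi> (E - R))" using m S e1 unfolding is_MCS_def E'_def[symmetric] by simp
    have a2: "\<forall>l\<in>R. \<not> lsat (induced \<Phi> (E - R \<union> {l}))"
    proof
      fix l assume "l \<in> R"
      then show "\<not> lsat (induced \<Phi> (E - R \<union> {l}))"
        using m S e2[OF \<open>l \<in> R\<close>] unfolding is_MCS_def E'_def[symmetric] by simp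
    qed
    show "is_MCS \<Phi> R" unfolding is_MCS_def E_def[symmetric] using R EE a1 a2 by blast
  next
    assume m: "is_MCS \<Phi> R"
    have R: "R \<subseteq> E'"
    proof
      fix l assume l: "l \<in> R"
      show "l \<in> E'"
      proof (rule ccontr)
        assume "l \<notin> E'"
        then have "(E - R \<union> {l}) \<inter> E' = (E - R) \<inter> E'" by blast
        then show False using m l S unfolding is_MCS_def E_def[symmetric] by metis
      qed
    qed
    have e1: "(E - R) \<inter> E' = E' - R" using EE by blast
    have e2: "(E - R \<union> {l}) \<inter> E' = E' - R \<union> {l}" if "l \<in> R" for l using EE R that by blast
    have a1: "lsat (induced \<Psi> (E' - R))" using m S e1 unfolding is_MCS_def E_def[symmetric] by metis
    have a2: "\<forall>l\<in>R. \<not> lsat (induced \<Psi> (E' - R \<union> {l}))"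
    proof
      fix l assume "l \<in> R"
      then show "\<not> lsat (induced \<Psi> (E' - R \<union> {l}))"
        using m S e2[OF \<open>l \<in> R\<close>] unfolding is_MCS_def E_def[symmetric] by metis
    qed
    show "is_MCS \<Psi> R" unfolding is_MCS_def E'_def[symmetric] using R a1 a2 by blast
  qed
  then show ?thesis using True by (auto simp: sub_def MCS_def \<Psi>_def)
qed

end
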